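(* Let $M$ be a $po$-$\Gamma$-semigroup. Then $M$ is completely regular if and only if every bi-ideal of $M$ is semiprime.
   Context: A $po$-$\Gamma$-semigroup is a triple $(M,\Gamma,\le)$ where $M,\Gamma$ are nonempty sets with a map $M\times\Gamma\times M\to M$, $(a,\gamma,b)\mapsto a\gamma b$, satisfying $(a\gamma b)\mu c=a\gamma(b\mu c)$ for all $a,b,c\in M$, $\gamma,\mu\in\Gamma$, and $\le$ is a partial order on $M$ such that $a\le b$ implies $a\gamma c\le b\gamma c$ and $c\gamma a\le c\gamma b$ for all $c\in M$, $\gamma\in\Gamma$. For $A,B\subseteq M$, $A\Gamma B=\{a\gamma b: a\in A,\gamma\in\Gamma,b\in B\}$ (with $a\Gamma B$ meaning $\{a\}\Gamma B$, etc.), and $(A]=\{t\in M: t\le a \text{ for some } a\in A\}$. $M$ is regular if $a\in(a\Gamma M\Gamma a]$ for all $a\in M$; left regular if $a\in(M\Gamma a\Gamma a]$ for all $a\in M$; right regular if $a\in(a\Gamma a\Gamma M]$ for all $a\in M$; completely regular if it is regular, left regular and right regular. A bi-ideal of $M$ is a nonempty subset $B\subseteq M$ such that $B\Gamma M\Gamma B\subseteq B$ and, whenever $a\in B$, $b\in M$ and $b\le a$, then $b\in B$. A subset $B$ of $M$ is semiprime if for every $a\in M$, $a\Gamma a\subseteq B$ implies $a\in B$. *)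

theory Defs
  imports Main
begin

definition po_gamma_semigroup ::
  "'a set \<Rightarrow> 'g set \<Rightarrow> ('a \<Rightarrow> 'g \<Rightarrow> 'a \<Rightarrow> 'a) \<Rightarrow> ('a \<Rightarrow> 'a \<Rightarrow> bool) \<Rightarrow> bool" where
  "po_gamma_semigroup M G mult le \<longleftrightarrow>
     M \<noteq> {} \<and> G \<noteq> {} \<and>
     (\<forall>a\<in>M. \<forall>g\<in>G. \<forall>b\<in>M. mult a g b \<in> M) \<and>
     (\<forall>a\<in>M. \<forall>b\<in>M. \<forall>c\<in>M. \<forall>g\<in>G. \<forall>m\<in>G. mult (mult a g b) m c = mult a g (mult b m c)) \<and>
     (\<forall>a\<in>M. le a a) \<and>
     (\<forall>a\<in>M. \<forall>b\<in>M. le a b \<and> le b a \<longrightarrow> a = b) \<and>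
     (\<forall>a\<in>M. \<forall>b\<in>M. \<forall>c\<in>M. le a b \<and> le b c \<longrightarrow> le a c) \<and>
     (\<forall>a\<in>M. \<forall>b\<in>M. \<forall>c\<in>M. \<forall>g\<in>G. le a b \<longrightarrow> le (mult a g c) (mult b g c) \<and> le (mult c g a) (mult c g b))"

definition gprod ::
  "'g set \<Rightarrow> ('a \<Rightarrow> 'g \<Rightarrow> 'a \<Rightarrow> 'a) \<Rightarrow> 'a set \<Rightarrow> 'a set \<Rightarrow> 'a set" where
  "gprod G mult A B = {mult a g b | a g b. a \<in> A \<and> g \<in> G \<and> b \<in> B}"

definition down :: "'a set \<Rightarrow> ('a \<Rightarrow> 'a \<Rightarrow> bool) \<Rightarrow> 'a set \<Rightarrow> 'a set" where
  "down M le A = {t \<in> M. \<exists>a\<in>A. le t a}"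

definition regular_pg where
  "regular_pg M G mult le \<longleftrightarrow>
     (\<forall>a\<in>M. a \<in> down M le (gprod G mult (gprod G mult {a} M) {a}))"

definition left_regular_pg where
  "left_regular_pg M G mult le \<longleftrightarrow>
     (\<forall>a\<in>M. a \<in> down M le (gprod G mult (gprod G mult M {a}) {a}))"

definition right_regular_pg where
  "right_regular_pg M G mult le \<longleftrightarrow>
     (\<forall>a\<in>M. a \<in> down M le (gprod G mult (gprod G mult {a} {a}) M))"

definition completely_regular_pg where
  "completely_regular_pg M G mult le \<longleftrightarrow>
     regular_pg M G mult le \<and> left_regular_pg M G mult le \<and> right_regular_pg M G mult le"

definition bi_ideal_pg where
  "bi_ideal_pg M G mult le B \<longleftrightarrow>
     B \<subseteq> M \<and> B \<noteq> {} \<and>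
     gprod G mult (gprod G mult B M) B \<subseteq> B \<and>
     (\<forall>a\<in>B. \<forall>b\<in>M. le b a \<longrightarrow> b \<in> B)"

definition semiprime_pg where
  "semiprime_pg M G mult B \<longleftrightarrow>
     (\<forall>a\<in>M. gprod G mult {a} {a} \<subseteq> B \<longrightarrow> a \<in> B)"

end

theory Submission
  imports Defs
begin

theorem proposition4:
  assumes "po_gamma_semigroup M G mult le"
  shows "completely_regular_pg M G mult le \<longleftrightarrow>
         (\<forall>B. bi_ideal_pg M G mult le B \<longrightarrow> semiprime_pg M G mult B)"
proof -
  note D = assms[unfolded po_gamma_semigroup_def]
  have C2: "G \<noteq> {}" using D by (rule conjE) (erule conjE, assumption)
  note Ds = D[THEN conjunct2, THEN conjunct2]
  have cl[simp]: "\<And>a g b. a\<in>M \<Longrightarrow> g\<in>G \<Longrightarrow> b\<in>M \<Longrightarrow> mult a g b \<in> M"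
    using Ds[THEN conjunct1] by blast
  have as[simp]: "\<And>a b c g m. a\<in>M \<Longrightarrow> b\<in>M \<Longrightarrow> c\<in>M \<Longrightarrow> g\<in>G \<Longrightarrow> m\<in>G \<Longrightarrow>
      mult (mult a g b) m c = mult a g (mult b m c)" using Ds[THEN conjunct2, THEN conjunct1] by blast
  have rf: "\<And>a. a\<in>M \<Longrightarrow> le a a" using Ds[THEN conjunct2, THEN conjunct2, THEN conjunct1] by blast
  have tr: "\<And>a b c. a\<in>M \<Longrightarrow> b\<in>M \<Longrightarrow> c\<in>M \<Longrightarrow> le a b \<Longrightarrow> le b c \<Longrightarrow> le a c"
    using Ds[THEN conjunct2, THEN conjunct2, THEN conjunct2, THEN conjunct2, THEN conjunct1] by blast
  note mono = Ds[THEN conjunct2, THEN conjunct2, THEN conjunct2, THEN conjunct2, THEN conjunct2]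
  have mL: "\<And>a b c g. a\<in>M \<Longrightarrow> b\<in>M \<Longrightarrow> c\<in>M \<Longrightarrow> g\<in>G \<Longrightarrow> le a b \<Longrightarrow> le (mult a g c) (mult b g c)" using mono by blast
  have mR: "\<And>a b c g. a\<in>M \<Longrightarrow> b\<in>M \<Longrightarrow> c\<in>M \<Longrightarrow> g\<in>G \<Longrightarrow> le a b \<Longrightarrow> le (mult c g a) (mult c g b)" using mono by blast
  have m2: "\<And>a a' b b' g. a\<in>M \<Longrightarrow> a'\<in>M \<Longrightarrow> b\<in>M \<Longrightarrow> b'\<in>M \<Longrightarrow> g\<in>G \<Longrightarrow> le a a' \<Longrightarrow> le b b'
      \<Longrightarrow> le (mult a g b) (mult a' g b')"
  proof -
    fix a a' b b' g assume "a\<in>M" "a'\<in>M" "b\<in>M" "b'\<in>M" "g\<in>G" "le a a'" "le b b'"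
    thus "le (mult a g b) (mult a' g b')"
      using tr[OF cl[of a g b] cl[of a' g b] cl[of a' g b'] mL[of a a' b g] mR[of b b' a' g]] by blast
  qed
  have GN: "G \<noteq> {}" by (rule C2)
  show ?thesis
  proof
    assume cr: "completely_regular_pg M G mult le"
    show "\<forall>B. bi_ideal_pg M G mult le B \<longrightarrow> semiprime_pg M G mult B"
    proof (intro allI impI)
      fix B assume bi: "bi_ideal_pg M G mult le B"
      show "semiprime_pg M G mult B" unfolding semiprime_pg_def
      proof (intro ballI impI)
        fix a assume aM: "a \<in> M" and sq: "gprod G mult {a} {a} \<subseteq> B"
        have sqB: "\<And>g. g\<in>G \<Longrightarrow> mult a g a \<in> B" using sq unfolding gprod_def by blast
        from cr aM obtain \<alpha> x \<beta> where h1: "\<alpha>\<in>G" "x\<in>M" "\<beta>\<in>G" "le a (mult (mult a \<alpha> x) \<beta> a)"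
          unfolding completely_regular_pg_def regular_pg_def down_def gprod_def by blast
        from cr aM obtain y \<gamma> \<delta> where h2: "y\<in>M" "\<gamma>\<in>G" "\<delta>\<in>G" "le a (mult (mult y \<gamma> a) \<delta> a)"
          unfolding completely_regular_pg_def left_regular_pg_def down_def gprod_def by blast
        from cr aM obtain \<epsilon> \<zeta> z where h3: "\<epsilon>\<in>G" "\<zeta>\<in>G" "z\<in>M" "le a (mult (mult a \<epsilon> a) \<zeta> z)"
          unfolding completely_regular_pg_def right_regular_pg_def down_def gprod_def by blast
        have "le (mult (mult a \<alpha> x) \<beta> a)
               (mult (mult (mult (mult a \<epsilon> a) \<zeta> z) \<alpha> x) \<beta> (mult (mult y \<gamma> a) \<delta> a))"
          using m2[OF _ _ aM _ h1(3) mL[OF aM _ h1(2) h1(1) h3(4)] h2(4)] aM h1 h2 h3 by simp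
        also have "mult (mult (mult (mult a \<epsilon> a) \<zeta> z) \<alpha> x) \<beta> (mult (mult y \<gamma> a) \<delta> a)
           = mult (mult (mult a \<epsilon> a) \<zeta> (mult (mult z \<alpha> x) \<beta> y)) \<gamma> (mult a \<delta> a)"
          using aM h1 h2 h3 by simp
        finally have le0: "le (mult (mult a \<alpha> x) \<beta> a) (mult (mult (mult a \<epsilon> a) \<zeta> (mult (mult z \<alpha> x) \<beta> y)) \<gamma> (mult a \<delta> a))" .
        have le1: "le a (mult (mult (mult a \<epsilon> a) \<zeta> (mult (mult z \<alpha> x) \<beta> y)) \<gamma> (mult a \<delta> a))"
          by (rule tr[OF aM _ _ h1(4) le0]) (simp_all add: aM h1 h2 h3)
        have "mult (mult (mult a \<epsilon> a) \<zeta> (mult (mult z \<alpha> x) \<beta> y)) \<gamma> (mult a \<delta> a)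
               \<in> gprod G mult (gprod G mult B M) B"
          unfolding gprod_def using sqB[OF h3(1)] sqB[OF h2(3)] h3(2) h2(2) cl[OF cl[OF h3(3) h1(1) h1(2)] h1(3) h2(1)] by blast
        hence "mult (mult (mult a \<epsilon> a) \<zeta> (mult (mult z \<alpha> x) \<beta> y)) \<gamma> (mult a \<delta> a) \<in> B"
          using bi unfolding bi_ideal_pg_def by blast
        thus "a \<in> B" using bi le1 aM unfolding bi_ideal_pg_def by blast
      qed
    qed
  next
    assume H: "\<forall>B. bi_ideal_pg M G mult le B \<longrightarrow> semiprime_pg M G mult B"
    have key: "\<exists>g\<in>G. \<exists>m\<in>M. \<exists>h\<in>G. \<exists>k\<in>G. \<exists>l\<in>G. le a (mult a g (mult a h (mult m k (mult a l a))))"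
      if aM: "a\<in>M" for a
    proof -
      define B where "B = {t\<in>M. (\<exists>g\<in>G. le t (mult a g a)) \<or>
         (\<exists>g\<in>G. \<exists>m\<in>M. \<exists>h\<in>G. \<exists>k\<in>G. \<exists>l\<in>G. le t (mult a g (mult a h (mult m k (mult a l a)))))}"
      obtain g0 where g0: "g0\<in>G" using GN by blast
      have bi: "bi_ideal_pg M G mult le B"
        unfolding bi_ideal_pg_def
      proof (intro conjI)
        show "B \<subseteq> M" unfolding B_def by blast
        have "mult a g0 a \<in> B" using aM g0 rf[of "mult a g0 a"] unfolding B_def by auto
        thus "B \<noteq> {}" by blast
        show "\<forall>x\<in>B. \<forall>b\<in>M. le b x \<longrightarrow> b \<in> B"
        proof (intro ballI impI)
          fix x b assume x: "x\<in>B" and bM: "b\<in>M" and le: "le b x"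
          have xM: "x\<in>M" using x unfolding B_def by blast
          from x show "b\<in>B" unfolding B_def using bM aM by (blast intro: tr[OF bM xM _ le] cl)
        qed
        show "gprod G mult (gprod G mult B M) B \<subseteq> B"
        proof
          fix t assume "t \<in> gprod G mult (gprod G mult B M) B"
          then obtain b1 g m h b2 where t: "t = mult (mult b1 g m) h b2" and
            b1: "b1\<in>B" and g: "g\<in>G" and m: "m\<in>M" and h: "h\<in>G" and b2: "b2\<in>B"
            unfolding gprod_def by blast
          have b1M: "b1\<in>M" and b2M: "b2 \<in> M" using b1 b2 unfolding B_def by auto
          have tM: "t\<in>M" using t b1M b2M g m h by simp
          have gen: "le t (mult (mult u1 g m) h u2)" if "u1\<in>M" "u2\<in>M" "le b1 u1" "le b2 u2" for u1 u2
            unfolding t using m2[OF _ _ b2M that(2) h mL[OF b1M that(1) m g that(3)] that(4)] that b1M g m by simp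
          have "\<exists>g\<in>G. \<exists>m\<in>M. \<exists>h\<in>G. \<exists>k\<in>G. \<exists>l\<in>G. le t (mult a g (mult a h (mult m k (mult a l a))))"
          proof -
            from b1 consider (A) g1 where "g1\<in>G" "le b1 (mult a g1 a)"
              | (B) g1 m1 h1 k1 l1 where "g1\<in>G" "m1\<in>M" "h1\<in>G" "k1\<in>G" "l1\<in>G"
                  "le b1 (mult a g1 (mult a h1 (mult m1 k1 (mult a l1 a))))"
              unfolding B_def by blast
            then show ?thesis
            proof cases
              case A
              from b2 consider (A2) g2 where "g2\<in>G" "le b2 (mult a g2 a)"
                | (B2) g2 m2 h2 k2 l2 where "g2\<in>G" "m2\<in>M" "h2\<in>G" "k2\<in>G" "l2\<in>G"
                    "le b2 (mult a g2 (mult a h2 (mult m2 k2 (mult a l2 a))))"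
                unfolding B_def by blast
              then show ?thesis
              proof cases
                case A2
                have "le t (mult (mult (mult a g1 a) g m) h (mult a g2 a))"
                  using gen A A2 aM by simp
                thus ?thesis using A A2 aM g m h by (intro bexI[of _ g1] bexI[of _ m] bexI[of _ g] bexI[of _ h] bexI[of _ g2]) auto
              next
                case B2
                have "le t (mult (mult (mult a g1 a) g m) h (mult a g2 (mult a h2 (mult m2 k2 (mult a l2 a)))))"
                  using gen A B2 aM by simp
                thus ?thesis using A B2 aM g m h
                  by (intro bexI[of _ g1] bexI[of _ "mult m h (mult a g2 (mult a h2 m2))"] bexI[of _ g] bexI[of _ k2] bexI[of _ l2]) auto
              qed
            next
              case B
              from b2 consider (A2) g2 where "g2\<in>G" "le b2 (mult a g2 a)"
                | (B2) g2 m2 h2 k2 l2 where "g2\<in>G" "m2\<in>M" "h2\<in>G" "k2\<in>G" "l2\<in>G"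
                    "le b2 (mult a g2 (mult a h2 (mult m2 k2 (mult a l2 a))))"
                unfolding B_def by blast
              then show ?thesis
              proof cases
                case A2
                have "le t (mult (mult (mult a g1 (mult a h1 (mult m1 k1 (mult a l1 a)))) g m) h (mult a g2 a))"
                  using gen B A2 aM by simp
                thus ?thesis using B A2 aM g m h
                  by (intro bexI[of _ g1] bexI[of _ "mult m1 k1 (mult a l1 (mult a g m))"] bexI[of _ h1] bexI[of _ h] bexI[of _ g2]) auto
              next
                case B2
                have "le t (mult (mult (mult a g1 (mult a h1 (mult m1 k1 (mult a l1 a)))) g m) h (mult a g2 (mult a h2 (mult m2 k2 (mult a l2 a)))))"
                  using gen B B2 aM by simp
                thus ?thesis using B B2 aM g m h
                  by (intro bexI[of _ g1] bexI[of _ "mult m1 k1 (mult a l1 (mult a g (mult m h (mult a g2 (mult a h2 m2)))))"] bexI[of _ h1] bexI[of _ k2] bexI[of _ l2]) auto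
              qed
            qed
          qed
          thus "t \<in> B" unfolding B_def using tM by blast
        qed
      qed
      have "gprod G mult {a} {a} \<subseteq> B"
        unfolding gprod_def B_def using aM by (blast intro: rf cl)
      hence "a \<in> B" using H bi aM unfolding semiprime_pg_def by blast
      then consider (A) g1 where "g1\<in>G" "le a (mult a g1 a)"
        | (B) g m h k l where "g\<in>G" "m\<in>M" "h\<in>G" "k\<in>G" "l\<in>G" "le a (mult a g (mult a h (mult m k (mult a l a))))"
        unfolding B_def by blast
      then show ?thesis
      proof cases
        case A
        have s1: "le (mult a g1 a) (mult (mult a g1 a) g1 (mult a g1 a))"
          using m2[OF aM _ aM _ A(1) A(2) A(2)] A aM by simp
        have le4: "le a (mult (mult a g1 a) g1 (mult a g1 a))"
          by (rule tr[OF aM _ _ A(2) s1]) (simp_all add: aM A)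
        have s2: "le (mult a g1 a) (mult (mult (mult a g1 a) g1 (mult a g1 a)) g1 a)"
          by (rule mL[OF aM _ aM A(1) le4]) (simp add: aM A)
        have "le a (mult (mult (mult a g1 a) g1 (mult a g1 a)) g1 a)"
          by (rule tr[OF aM _ _ A(2) s2]) (simp_all add: aM A)
        thus ?thesis using A aM by (intro bexI[of _ g1] bexI[of _ a]) auto
      next
        case B thus ?thesis by blast
      qed
    qed
    show "completely_regular_pg M G mult le"
      unfolding completely_regular_pg_def regular_pg_def left_regular_pg_def right_regular_pg_def
    proof (intro conjI ballI)
      fix a assume aM: "a\<in>M"
      from key[OF aM] obtain g m h k l where H: "g\<in>G" "m\<in>M" "h\<in>G" "k\<in>G" "l\<in>G"
        "le a (mult a g (mult a h (mult m k (mult a l a))))" by blast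
      define w where "w = mult a h (mult m k a)"
      have wM: "w\<in>M" unfolding w_def using aM H by simp
      have "mult (mult a g w) l a \<in> gprod G mult (gprod G mult {a} M) {a}"
        unfolding gprod_def using wM H by blast
      moreover have "le a (mult (mult a g w) l a)" using H aM wM unfolding w_def by simp
      ultimately show "a \<in> down M le (gprod G mult (gprod G mult {a} M) {a})"
        unfolding down_def using aM by blast
      define u where "u = mult a g (mult a h m)"
      have uM: "u\<in>M" unfolding u_def using aM H by simp
      have "mult (mult u k a) l a \<in> gprod G mult (gprod G mult M {a}) {a}"
        unfolding gprod_def using uM H by blast
      moreover have "le a (mult (mult u k a) l a)" using H aM uM unfolding u_def by simp
      ultimately show "a \<in> down M le (gprod G mult (gprod G mult M {a}) {a})"
        unfolding down_def using aM by blast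
      define v where "v = mult m k (mult a l a)"
      have vM: "v\<in>M" unfolding v_def using aM H by simp
      have "mult (mult a g a) h v \<in> gprod G mult (gprod G mult {a} {a}) M"
        unfolding gprod_def using vM H by blast
      moreover have "le a (mult (mult a g a) h v)" using H aM vM unfolding v_def by simp
      ultimately show "a \<in> down M le (gprod G mult (gprod G mult {a} {a}) M)"
        unfolding down_def using aM by blast
    qed
  qed
qed

end
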